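(* Let $\Omega$ be a distribution of $\Sigma$, $\mathsf{Obs}$ an observation function over $\Sigma$ with $\Omega\models\mathsf{Obs}$, and $(\sigma,b)\in\Sigma^\star\times\{+,-\}$ with $\sigma\notin\mathsf{Dom}(\mathsf{Obs})$ such that, with $\mathsf{Obs}'=\mathsf{Obs}\cup\{(\sigma,b)\}$, $\Omega\not\models\mathsf{Obs}'$. Then $\mathit{CED}(\Omega,\mathsf{Obs}')\ne\emptyset$, and every $(\sigma_N,P)\in\mathit{CED}(\Omega,\mathsf{Obs}')$ has the following form: - if $b=-$: $\sigma_N=\sigma$ and $P(\Sigma_i)\in\mathsf{Dom}(\mathsf{Obs})$ for all $\Sigma_i\in\Omega$; - if $b=+$: $\sigma_N\in\mathsf{Dom}(\mathsf{Obs})$, and with $S=\{\Sigma_i\in\Omega\mid P(\Sigma_i)=\sigma\}$ we have $S\ne\emptyset$ and $P(\Sigma_i)\in\mathsf{Dom}(\mathsf{Obs})$ for all $\Sigma_i\in\Omega\setminus S$.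
   Context: $\sigma|_{\Sigma'}$ is the projection of a word onto $\Sigma'$. A distribution of $\Sigma$ is a finite set of subsets of $\Sigma$ with union $\Sigma$. An observation function is a partial map $\mathsf{Obs}:\Sigma^\star\rightharpoonup\{+,-\}$ with finite domain, identified with its set of pairs $(\sigma,\mathsf{Obs}(\sigma))$. $\Omega\models\mathsf{Obs}$ means there exist $\mathcal L_{\Sigma_i}\subseteq\Sigma_i^\star$ ($\Sigma_i\in\Omega$) such that $\mathcal L=\{w\mid\forall\Sigma_i\in\Omega.\ w|_{\Sigma_i}\in\mathcal L_{\Sigma_i}\}$ satisfies $\sigma\in\mathcal L\iff\mathsf{Obs}(\sigma)=+$ for all $\sigma\in\mathsf{Dom}(\mathsf{Obs})$. A counter-example to $\Omega\models\mathsf{Obs}$ is a pair $(\sigma_N,P)$ with $\sigma_N\in\mathsf{Dom}(\mathsf{Obs})$, $\mathsf{Obs}(\sigma_N)=-$, and $P:\Omega\to\mathsf{Dom}(\mathsf{Obs})$ with $\mathsf{Obs}(P(\Sigma_i))=+$ and $\sigma_N|_{\Sigma_i}=P(\Sigma_i)|_{\Sigma_i}$ for all $\Sigma_i\in\Omega$; $\mathit{CED}(\Omega,\mathsf{Obs})$ is the set of these. *)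

theory Defs
  imports Main "HOL-Library.FuncSet"
begin

datatype sign = Pos | Neg

definition proj :: "'a list \<Rightarrow> 'a set \<Rightarrow> 'a list" where
  "proj w S = filter (\<lambda>x. x \<in> S) w"

definition distribution :: "'a set \<Rightarrow> 'a set set \<Rightarrow> bool" where
  "distribution Sig Om \<longleftrightarrow> finite Om \<and> (\<forall>S\<in>Om. S \<subseteq> Sig) \<and> \<Union>Om = Sig"

definition observation :: "'a set \<Rightarrow> ('a list \<rightharpoonup> sign) \<Rightarrow> bool" where
  "observation Sig Obs \<longleftrightarrow> finite (dom Obs) \<and> dom Obs \<subseteq> lists Sig"

definition dist_lang :: "'a set set \<Rightarrow> ('a set \<Rightarrow> 'a list set) \<Rightarrow> 'a list set" where
  "dist_lang Om Ls = {w. \<forall>S\<in>Om. proj w S \<in> Ls S}"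

definition models :: "'a set set \<Rightarrow> ('a list \<rightharpoonup> sign) \<Rightarrow> bool" where
  "models Om Obs \<longleftrightarrow>
     (\<exists>Ls. (\<forall>S\<in>Om. Ls S \<subseteq> lists S) \<and>
           (\<forall>\<sigma>\<in>dom Obs. (\<sigma> \<in> dist_lang Om Ls \<longleftrightarrow> Obs \<sigma> = Some Pos)))"

definition CED :: "'a set set \<Rightarrow> ('a list \<rightharpoonup> sign) \<Rightarrow> ('a list \<times> ('a set \<Rightarrow> 'a list)) set" where
  "CED Om Obs = {(\<sigma>N, P). \<sigma>N \<in> dom Obs \<and> Obs \<sigma>N = Some Neg \<and>
      P \<in> extensional_funcset Om (dom Obs) \<and>
      (\<forall>S\<in>Om. Obs (P S) = Some Pos \<and> proj \<sigma>N S = proj (P S) S)}"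

end

theory Submission
  imports Defs
begin

lemma ced_not_models:
  assumes "(sN, P) \<in> CED Om Obs" shows "\<not> models Om Obs"
proof
  assume "models Om Obs"
  then obtain Ls where L: "\<forall>\<sigma>\<in>dom Obs. (\<sigma> \<in> dist_lang Om Ls \<longleftrightarrow> Obs \<sigma> = Some Pos)"
    unfolding models_def by blast
  from assms have c: "sN \<in> dom Obs" "Obs sN = Some Neg"
    "\<forall>S\<in>Om. P S \<in> dom Obs \<and> Obs (P S) = Some Pos \<and> proj sN S = proj (P S) S"
    unfolding CED_def by auto
  have "\<forall>S\<in>Om. proj (P S) S \<in> Ls S"
    using L c(3) unfolding dist_lang_def by blast
  hence "sN \<in> dist_lang Om Ls" using c(3) unfolding dist_lang_def by auto
  thus False using L c(1,2) by auto
qed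

lemma not_models_ced:
  assumes "\<not> models Om Obs" shows "CED Om Obs \<noteq> {}"
proof -
  define Ls where "Ls S = {proj w S | w. Obs w = Some Pos}" for S
  have sub: "\<forall>S\<in>Om. Ls S \<subseteq> lists S" unfolding Ls_def proj_def by auto
  have posin: "w \<in> dist_lang Om Ls" if "Obs w = Some Pos" for w
    using that unfolding dist_lang_def Ls_def by auto
  from assms sub obtain sN where s: "sN \<in> dom Obs"
    "\<not> (sN \<in> dist_lang Om Ls \<longleftrightarrow> Obs sN = Some Pos)"
    unfolding models_def by blast
  have neg: "Obs sN = Some Neg" using s posin
    by (metis (full_types) domD sign.exhaust)
  hence inl: "sN \<in> dist_lang Om Ls" using s by auto
  hence "\<forall>S\<in>Om. \<exists>w. Obs w = Some Pos \<and> proj sN S = proj w S"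
    unfolding dist_lang_def Ls_def by auto
  then obtain f where f: "\<forall>S\<in>Om. Obs (f S) = Some Pos \<and> proj sN S = proj (f S) S"
    by metis
  define P where "P S = (if S \<in> Om then f S else undefined)" for S
  have "(sN, P) \<in> CED Om Obs"
    unfolding CED_def using f s(1) neg by (auto simp: P_def extensional_def)
  thus ?thesis by blast
qed

theorem mainTheorem14:
  fixes Sig :: "'a set" and Om :: "'a set set" and Obs :: "'a list \<rightharpoonup> sign"
    and \<sigma> :: "'a list" and b :: sign
  assumes "distribution Sig Om"
    and "observation Sig Obs"
    and "models Om Obs"
    and "\<sigma> \<in> lists Sig"
    and "\<sigma> \<notin> dom Obs"
    and "\<not> models Om (Obs(\<sigma> \<mapsto> b))"
  shows "CED Om (Obs(\<sigma> \<mapsto> b)) \<noteq> {} \<and>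
    (\<forall>(\<sigma>N, P) \<in> CED Om (Obs(\<sigma> \<mapsto> b)).
      (b = Neg \<longrightarrow> \<sigma>N = \<sigma> \<and> (\<forall>S\<in>Om. P S \<in> dom Obs)) \<and>
      (b = Pos \<longrightarrow> \<sigma>N \<in> dom Obs \<and>
         (let T = {S \<in> Om. P S = \<sigma>} in T \<noteq> {} \<and> (\<forall>S \<in> Om - T. P S \<in> dom Obs))))"
proof (intro conjI)
  show "CED Om (Obs(\<sigma> \<mapsto> b)) \<noteq> {}" using assms(6) by (rule not_models_ced)
  show "\<forall>(\<sigma>N, P) \<in> CED Om (Obs(\<sigma> \<mapsto> b)).
      (b = Neg \<longrightarrow> \<sigma>N = \<sigma> \<and> (\<forall>S\<in>Om. P S \<in> dom Obs)) \<and>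
      (b = Pos \<longrightarrow> \<sigma>N \<in> dom Obs \<and>
         (let T = {S \<in> Om. P S = \<sigma>} in T \<noteq> {} \<and> (\<forall>S \<in> Om - T. P S \<in> dom Obs)))"
  proof (clarify)
    fix sN P assume c: "(sN, P) \<in> CED Om (Obs(\<sigma> \<mapsto> b))"
    hence c1: "sN \<in> dom (Obs(\<sigma> \<mapsto> b))" "(Obs(\<sigma> \<mapsto> b)) sN = Some Neg"
      "\<forall>S\<in>Om. P S \<in> dom (Obs(\<sigma> \<mapsto> b)) \<and> (Obs(\<sigma> \<mapsto> b)) (P S) = Some Pos
        \<and> proj sN S = proj (P S) S" "P \<in> extensional Om"
      unfolding CED_def by (auto simp: PiE_def)
    have noced: "(sN, P) \<notin> CED Om Obs" using ced_not_models assms(3) by blast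
    show "(b = Neg \<longrightarrow> sN = \<sigma> \<and> (\<forall>S\<in>Om. P S \<in> dom Obs)) \<and>
      (b = Pos \<longrightarrow> sN \<in> dom Obs \<and>
         (let T = {S \<in> Om. P S = \<sigma>} in T \<noteq> {} \<and> (\<forall>S \<in> Om - T. P S \<in> dom Obs)))"
    proof (intro conjI impI)
      assume b: "b = Neg"
      have PS: "\<forall>S\<in>Om. P S \<in> dom Obs \<and> Obs (P S) = Some Pos"
        using c1(3) b by (auto split: if_splits)
      thus "\<forall>S\<in>Om. P S \<in> dom Obs" by blast
      show "sN = \<sigma>"
      proof (rule ccontr)
        assume "sN \<noteq> \<sigma>"
        hence "(sN, P) \<in> CED Om Obs" using c1 PS unfolding CED_def by (auto simp: extensional_def)
        thus False using noced by blast
      qed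
    next
      assume b: "b = Pos"
      thus sd: "sN \<in> dom Obs" using c1(1,2) by (auto split: if_splits)
      have rest: "\<forall>S\<in>Om - {S \<in> Om. P S = \<sigma>}. P S \<in> dom Obs"
        using c1(3) by auto
      have "{S \<in> Om. P S = \<sigma>} \<noteq> {}"
      proof
        assume e: "{S \<in> Om. P S = \<sigma>} = {}"
        have "sN \<noteq> \<sigma>" using sd assms(5) by auto
        hence "(sN, P) \<in> CED Om Obs" using c1 e unfolding CED_def by (auto simp: extensional_def)
        thus False using noced by blast
      qed
      thus "let T = {S \<in> Om. P S = \<sigma>} in T \<noteq> {} \<and> (\<forall>S \<in> Om - T. P S \<in> dom Obs)"
        using rest by simp
    qed
  qed
qed

end
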